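(* Let $\beta>0$, $N$ constant, $t>0$, and $(x,y)=r(\cos\phi,\sin\phi)$ with $r>0$. Set $\alpha=\beta r t$ and $\gamma=\cos(\phi/2)$. Define $$\psi_G=-\frac{N}{2\pi}\int_0^\infty\frac{dk}{k}\,J_0(A),\qquad A=\left[\left(kx+\frac{\beta t}{k}\right)^2+k^2y^2\right]^{1/2},$$ which is the Green's function of Proposition 3.1 with $k_d=0$. Then $$\psi_G=-\frac{N}{\pi}\int_0^\infty \frac{dz}{\sqrt{1+z^2}}\,J_0\!\left(2\sqrt{\alpha}\,(z^2+\gamma^2)^{1/2}\right).$$
   Context: $J_0$ is the Bessel function of the first kind of order zero. *)

theory Defs
  imports "HOL-Analysis.Analysis"
begin

definition bessel_J0 :: "real \<Rightarrow> real" where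
  "bessel_J0 x = (\<Sum>m. (-1)^m * (x/2)^(2*m) / (fact m)^2)"

end

theory Submission
  imports Defs
begin

definition bc :: "nat \<Rightarrow> real" where
  "bc n = (if even n then (-1)^(n div 2) / (4^(n div 2) * (fact (n div 2))^2) else 0)"

lemma bc_bound: "\<bar>bc n\<bar> \<le> inverse (fact n)"
proof (cases "even n")
  case True
  then obtain m where n: "n = 2*m" by blast
  have "fact (2*m) = fact m * fact m * ((2*m) choose m)"
    using binomial_fact_lemma[of m "2*m"] by (simp add: mult_2)
  hence "(fact (2*m)::real) = fact m * fact m * real ((2*m) choose m)"
    by (metis of_nat_fact of_nat_mult)
  moreover have "real ((2*m) choose m) \<le> 4^m"
    using binomial_le_pow2[of "2*m" m] by (metis of_nat_le_iff of_nat_numeral of_nat_power power_mult power2_eq_square numeral_times_numeral semiring_norm(12) num_double)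
  ultimately have "(fact (2*m)::real) \<le> 4^m * (fact m)^2"
    by (simp add: power2_eq_square mult_left_mono)
  then show ?thesis using n
    by (simp add: bc_def abs_mult power_abs field_simps le_divide_eq)
next
  case False then show ?thesis by (simp add: bc_def)
qed

lemma bc_summable: "summable (\<lambda>n. bc n * y^n)"
proof (rule summable_comparison_test[OF _ summable_exp[of "\<bar>y\<bar>"]])
  show "\<exists>N. \<forall>n\<ge>N. norm (bc n * y ^ n) \<le> inverse (fact n) * \<bar>y\<bar> ^ n"
    using bc_bound by (auto simp: abs_mult power_abs intro!: mult_right_mono)
qed

lemma J0_powser: "bessel_J0 x = (\<Sum>n. bc n * x^n)"
proof -
  have S: "(\<lambda>n. bc n * x^n) sums (\<Sum>n. bc n * x^n)" using bc_summable by (rule summable_sums)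
  have R: "(\<lambda>m. bc (2*m) * x^(2*m)) sums (\<Sum>n. bc n * x^n)"
  proof (subst sums_mono_reindex[of "\<lambda>m. 2*m" "\<lambda>n. bc n * x^n"])
    show "strict_mono (\<lambda>m::nat. 2*m)" by (simp add: strict_mono_def)
    show "bc n * x^n = 0" if "n \<notin> range (\<lambda>m::nat. 2*m)" for n
    proof -
      have "odd n" using that by (auto elim!: evenE)
      thus ?thesis by (simp add: bc_def)
    qed
  qed (rule S)
  have p2: "(x/2)^(2*m) = x^(2*m) / 4^m" for m by (simp add: power_mult power_divide)
  have E: "bc (2*m) * x^(2*m) = (-1)^m * (x/2)^(2*m) / (fact m)^2" for m
    by (simp add: bc_def p2)
  show ?thesis using R unfolding bessel_J0_def E by (simp add: sums_iff)
qed

definition J1 :: "real \<Rightarrow> real" where "J1 x = (\<Sum>n. diffs bc n * x^n)"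
definition J2 :: "real \<Rightarrow> real" where "J2 x = (\<Sum>n. diffs (diffs bc) n * x^n)"

lemma bc1_summable: "summable (\<lambda>n. diffs bc n * y^n)"
  by (rule termdiff_converges_all[OF bc_summable])
lemma bc2_summable: "summable (\<lambda>n. diffs (diffs bc) n * y^n)"
  by (rule termdiff_converges_all[OF bc1_summable])

lemma J0_deriv: "(bessel_J0 has_real_derivative J1 x) (at x)"
  unfolding J1_def J0_powser[abs_def]
  by (rule termdiffs_strong_converges_everywhere[OF bc_summable])
lemma J1_deriv: "(J1 has_real_derivative J2 x) (at x)"
  unfolding J1_def[abs_def] J2_def
  by (rule termdiffs_strong_converges_everywhere[OF bc1_summable])

lemma bc_rec: "diffs (diffs bc) n + diffs bc (Suc n) + bc n = 0"
proof (cases "even n")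
  case True
  then obtain m where n: "n = 2*m" by blast
  have a: "Suc (Suc (2*m)) = 2 * Suc m" by simp
  have b2: "bc (2 * Suc m) = - bc (2*m) / (4 * (real m + 1)^2)"
    by (simp add: bc_def power2_eq_square add.commute)
  have "diffs (diffs bc) (2*m) + diffs bc (Suc (2*m)) = (2*real m + 2)^2 * bc (2 * Suc m)"
    unfolding diffs_def a by (simp add: power2_eq_square algebra_simps)
  also have "\<dots> = (4 * (real m + 1)^2) * (- bc (2*m) / (4 * (real m + 1)^2))"
    unfolding b2 by (simp add: power2_eq_square algebra_simps)
  also have "\<dots> = - bc (2*m)" by (simp del: of_nat_Suc)
  finally show ?thesis unfolding n by simp
next
  case False
  then show ?thesis by (simp add: diffs_def bc_def)
qed

lemma J_ode: "x * J2 x + J1 x + x * bessel_J0 x = 0"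
proof -
  have s0: "summable (\<lambda>n. bc n * x^n)" by (rule bc_summable)
  have s1: "summable (\<lambda>n. diffs bc n * x^n)" by (rule bc1_summable)
  have s2: "summable (\<lambda>n. diffs (diffs bc) n * x^n)" by (rule bc2_summable)
  have s1': "summable (\<lambda>n. diffs bc (Suc n) * x^(Suc n))"
    using s1 by (subst summable_Suc_iff)
  have "J1 x = (\<Sum>n. diffs bc (Suc n) * x^(Suc n)) + diffs bc 0 * x^0"
    unfolding J1_def using suminf_split_head[OF s1] by simp
  also have "diffs bc 0 = 0" by (simp add: diffs_def bc_def)
  finally have e1: "J1 x = (\<Sum>n. diffs bc (Suc n) * x^(Suc n))" by simp
  have e2: "x * J2 x = (\<Sum>n. diffs (diffs bc) n * x^(Suc n))"
    unfolding J2_def using suminf_mult[OF s2, of x] by (simp add: mult_ac)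
  have e0: "x * bessel_J0 x = (\<Sum>n. bc n * x^(Suc n))"
    unfolding J0_powser using suminf_mult[OF s0, of x] by (simp add: mult_ac)
  have s2': "summable (\<lambda>n. diffs (diffs bc) n * x^(Suc n))"
    using summable_mult[OF s2, of x] by (simp add: mult_ac)
  have s0': "summable (\<lambda>n. bc n * x^(Suc n))"
    using summable_mult[OF s0, of x] by (simp add: mult_ac)
  have "x * J2 x + J1 x + x * bessel_J0 x =
      (\<Sum>n. diffs (diffs bc) n * x^(Suc n) + diffs bc (Suc n) * x^(Suc n) + bc n * x^(Suc n))"
    unfolding e0 e1 e2
    by (subst suminf_add[OF summable_add[OF s2' s1'] s0', symmetric],
        subst suminf_add[OF s2' s1', symmetric]) simp
  also have "\<dots> = (\<Sum>n. (diffs (diffs bc) n + diffs bc (Suc n) + bc n) * x^(Suc n))"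
    by (simp add: algebra_simps)
  also have "\<dots> = 0" unfolding bc_rec by simp
  finally show ?thesis .
qed

definition GJ :: "real \<Rightarrow> real" where
  "GJ x = x * (bessel_J0 x)^2 + (bessel_J0 x)^2 / (2*x) + bessel_J0 x * J1 x + x * (J1 x)^2"

lemma J0_deriv'[derivative_intros]:
  "(f has_real_derivative f') (at x within S) \<Longrightarrow>
   ((\<lambda>x. bessel_J0 (f x)) has_real_derivative J1 (f x) * f') (at x within S)"
  using DERIV_chain2[OF J0_deriv] by blast
lemma J1_deriv'[derivative_intros]:
  "(f has_real_derivative f') (at x within S) \<Longrightarrow>
   ((\<lambda>x. J1 (f x)) has_real_derivative J2 (f x) * f') (at x within S)"
  using DERIV_chain2[OF J1_deriv] by blast

lemma alg: fixes x J D E :: real assumes "x > 0" "x*E + D + x*J = 0"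
  shows "(J^2 + x * (2 * J * D)) + ((2*J*D) * (2*x) - J^2 * 2) / (2*x)^2
      + (D * D + J * E) + (D^2 + x * (2 * D * E)) = - (J^2) / (2 * x^2)"
proof -
  have E: "E = (- D - x*J) / x" using assms by (simp add: field_simps)
  show ?thesis
    unfolding E using assms by (simp add: field_simps power2_eq_square)
qed

lemma GJ_deriv: assumes "x > 0"
  shows "(GJ has_real_derivative (- (bessel_J0 x ^ 2) / (2 * x ^ 2))) (at x)"
proof -
  let ?J = "bessel_J0 x" and ?D = "J1 x" and ?E = "J2 x"
  have "(GJ has_real_derivative
      (?J^2 + x * (2 * ?J * ?D)) + ((2*?J*?D) * (2*x) - ?J^2 * 2) / (2*x)^2
      + (?D * ?D + ?J * ?E) + (?D^2 + x * (2 * ?D * ?E))) (at x)"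
    unfolding GJ_def[abs_def] using assms
    by (auto intro!: derivative_eq_intros simp: power2_eq_square)
  moreover have "x * ?E + ?D + x * ?J = 0" using J_ode[of x] by simp
  ultimately show ?thesis using alg[OF assms] by simp
qed

lemma alg2: fixes x J D :: real assumes "x > 0"
  shows "x * (J^2/(2*x) + J * D + x * D^2) = (J/2 + x * D)^2 + J^2/4"
  using assms by (simp add: field_simps power2_eq_square)

lemma GJ_lower: assumes "x > 0" shows "x * (bessel_J0 x)^2 \<le> GJ x"
proof -
  let ?J = "bessel_J0 x" and ?D = "J1 x"
  have g: "GJ x - x * ?J^2 = ?J^2/(2*x) + ?J * ?D + x * ?D^2" unfolding GJ_def by simp
  have "x * (GJ x - x * ?J^2) = (?J/2 + x * ?D)^2 + ?J^2/4" unfolding g by (rule alg2[OF assms])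
  also have "\<dots> \<ge> 0" by simp
  finally show ?thesis using assms by (simp add: zero_le_mult_iff)
qed

lemma J0_decay: assumes "x \<ge> 1" shows "x * (bessel_J0 x)^2 \<le> GJ 1"
proof -
  have "GJ x \<le> GJ 1"
  proof (rule DERIV_nonpos_imp_nonincreasing[OF assms])
    fix u :: real assume u: "1 \<le> u" "u \<le> x"
    have "- (bessel_J0 u ^ 2) / (2 * u ^ 2) \<le> 0"
      by (intro divide_nonpos_nonneg) auto
    with GJ_deriv[of u] u show "\<exists>y. (GJ has_real_derivative y) (at u) \<and> y \<le> 0" by auto
  qed
  with GJ_lower[of x] assms show ?thesis by simp
qed

lemma J0_cont: "continuous_on S bessel_J0"
  using J0_deriv by (meson DERIV_isCont continuous_at_imp_continuous_on)
lemma J0_isCont: "isCont bessel_J0 x"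
  using J0_deriv by (rule DERIV_isCont)
lemma J0_meas[measurable]: "bessel_J0 \<in> borel_measurable borel"
  by (rule borel_measurable_continuous_onI[OF J0_cont])

lemma J0_bound: "\<exists>K>0. \<forall>x\<ge>0. \<bar>bessel_J0 x\<bar> * sqrt (1 + x) \<le> K"
proof -
  have "bounded (bessel_J0 ` {0..1})"
    by (intro compact_imp_bounded compact_continuous_image J0_cont compact_Icc)
  hence "\<exists>M. \<forall>y\<in>bessel_J0 ` {0..1}. norm y \<le> M" by (simp only: bounded_iff)
  then obtain M where M0: "\<forall>y\<in>bessel_J0 ` {0..1}. norm y \<le> M" by (elim exE)
  have M: "\<bar>bessel_J0 x\<bar> \<le> M" if "x \<in> {0..1}" for x
    using bspec[OF M0 imageI[OF that, of bessel_J0]] by (simp only: real_norm_def)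
  define K where "K = max (M * sqrt 2) (sqrt (2 * \<bar>GJ 1\<bar>)) + 1"
  have "\<bar>bessel_J0 x\<bar> * sqrt (1 + x) \<le> K" if "x \<ge> 0" for x
  proof (cases "x \<le> 1")
    case True
    have "\<bar>bessel_J0 x\<bar> * sqrt (1 + x) \<le> M * sqrt 2"
      using M[of x] True that by (intro mult_mono) auto
    thus ?thesis unfolding K_def by linarith
  next
    case False
    have "(\<bar>bessel_J0 x\<bar> * sqrt (1 + x))^2 = (bessel_J0 x)^2 * (1 + x)"
      using that by (simp add: power_mult_distrib)
    also have "\<dots> \<le> (bessel_J0 x)^2 * (2 * x)" using False by (intro mult_left_mono) auto
    also have "\<dots> = 2 * (x * (bessel_J0 x)^2)" by simp
    also have "\<dots> \<le> 2 * \<bar>GJ 1\<bar>" using J0_decay[of x] False by simp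
    finally have "\<bar>bessel_J0 x\<bar> * sqrt (1 + x) \<le> sqrt (2 * \<bar>GJ 1\<bar>)"
      using real_le_rsqrt by blast
    thus ?thesis unfolding K_def by linarith
  qed
  moreover have "K > 0"
  proof -
    have "K \<ge> sqrt (2 * \<bar>GJ 1\<bar>) + 1" unfolding K_def by simp
    moreover have "sqrt (2 * \<bar>GJ 1\<bar>) \<ge> 0" by simp
    ultimately show ?thesis by linarith
  qed
  ultimately show ?thesis by blast
qed


definition H :: "real \<Rightarrow> real" where "H z = 1 / ((1 + \<bar>z\<bar>) * sqrt (1 + \<bar>z\<bar>))"

lemma H_pos_int: "set_integrable lborel {0<..} (\<lambda>z. 1 / ((1 + z) * sqrt (1 + z)))"
proof -
  have "set_integrable lborel (einterval 0 \<infinity>) (\<lambda>z. 1 / ((1 + z) * sqrt (1 + z)))"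
  proof (rule interval_integral_FTC_nonneg[where F="\<lambda>z. - 2 / sqrt (1 + z)" and A="-2" and B=0])
    show "(0::ereal) < \<infinity>" by simp
    fix x assume x: "0 < ereal x" "ereal x < \<infinity>"
    hence "x > 0" by simp
    thus "((\<lambda>z. - 2 / sqrt (1 + z)) has_real_derivative 1 / ((1 + x) * sqrt (1 + x))) (at x)"
      by (auto intro!: derivative_eq_intros simp: field_simps power2_eq_square)
    show "isCont (\<lambda>z. 1 / ((1 + z) * sqrt (1 + z))) x" using \<open>x > 0\<close>
      by (intro continuous_intros) auto
  next
    show "AE x in lborel. 0 < ereal x \<longrightarrow> ereal x < \<infinity> \<longrightarrow> 0 \<le> 1 / ((1 + x) * sqrt (1 + x))"
      by (intro AE_I2) auto
    show "(((\<lambda>z. - 2 / sqrt (1 + z)) \<circ> real_of_ereal) \<longlongrightarrow> -2) (at_right 0)"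
      unfolding zero_ereal_def ereal_tendsto_simps1
    proof -
      have "isCont (\<lambda>z. - 2 / sqrt (1 + z)) 0" by (intro continuous_intros) auto
      hence "((\<lambda>z. - 2 / sqrt (1 + z)) \<longlongrightarrow> - 2 / sqrt (1 + 0)) (at 0)"
        by (simp add: isCont_def)
      thus "((\<lambda>z. - 2 / sqrt (1 + z)) \<longlongrightarrow> -2) (at_right 0)"
        by (simp add: filterlim_at_split)
    qed
    show "(((\<lambda>z. - 2 / sqrt (1 + z)) \<circ> real_of_ereal) \<longlongrightarrow> 0) (at_left \<infinity>)"
      unfolding ereal_tendsto_simps1
    proof -
      have l1: "LIM z at_top. (1::real) + z :> at_top"
        using filterlim_tendsto_add_at_top[OF tendsto_const[of "1::real"] filterlim_ident] .
      have "LIM z at_top. sqrt (1 + z) :> at_top" by (rule filterlim_compose[OF sqrt_at_top l1])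
      hence "LIM z at_top. sqrt (1 + z) :> at_infinity" by (rule filterlim_at_top_imp_at_infinity)
      thus "((\<lambda>z. - 2 / sqrt (1 + z)) \<longlongrightarrow> 0) at_top"
        by (rule tendsto_divide_0[OF tendsto_const])
    qed
  qed
  thus ?thesis by (simp add: einterval_eq_Ici[of 0, unfolded zero_ereal_def[symmetric]])
qed

lemma H_int: "integrable lborel H"
proof -
  have "set_integrable lborel {0<..} H = set_integrable lborel {0<..} (\<lambda>z. 1 / ((1 + z) * sqrt (1 + z)))"
    by (rule set_integrable_cong) (auto simp: H_def)
  with H_pos_int have p: "set_integrable lborel {0<..} H" by simp
  have n: "set_integrable lborel {..<0} H"
  proof -
    have "integrable lborel (\<lambda>x. indicator {0<..} x *\<^sub>R H x)"
      using p unfolding set_integrable_def .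
    hence "integrable lborel (\<lambda>x. (\<lambda>x. indicator {0<..} x *\<^sub>R H x) (0 + (-1) * x))"
      by (rule lborel_integrable_real_affine) simp
    moreover have "(\<lambda>x. (\<lambda>x. indicator {0<..} x *\<^sub>R H x) (0 + (-1) * x)) = (\<lambda>x. indicator {..<0} x *\<^sub>R H x)"
      by (auto simp: H_def indicator_def)
    ultimately show ?thesis unfolding set_integrable_def by simp
  qed
  have z: "set_integrable lborel {0} H" by simp
  have "set_integrable lborel ({..<0} \<union> {0} \<union> {0<..}) H"
    by (intro set_integrable_Un n z p) auto
  moreover have "{..<0} \<union> {0} \<union> {0<..} = (UNIV :: real set)" by auto
  ultimately show ?thesis unfolding set_integrable_def by simp
qed

lemma H_meas[measurable]: "H \<in> borel_measurable borel"
  unfolding H_def by measurable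

lemma f2_bound:
  fixes al ga :: real
  assumes al: "al > 0"
  shows "\<exists>C. \<forall>z. \<bar>bessel_J0 (2 * sqrt al * sqrt (z^2 + ga^2)) / sqrt (1 + z^2)\<bar> \<le> C * H z"
proof -
  obtain K where K: "K > 0" "\<And>x. x \<ge> 0 \<Longrightarrow> \<bar>bessel_J0 x\<bar> * sqrt (1 + x) \<le> K"
    using J0_bound by blast
  define c where "c = 2 * sqrt al"
  have c: "c > 0" using al by (simp add: c_def)
  define m where "m = min 1 c"
  have m: "m > 0" "m \<le> 1" "m \<le> c" using c by (auto simp: m_def)
  define C where "C = K * sqrt 2 / sqrt m"
  have "\<bar>bessel_J0 (c * sqrt (z^2 + ga^2)) / sqrt (1 + z^2)\<bar> \<le> C * H z" for z
  proof -
    define u where "u = c * sqrt (z^2 + ga^2)"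
    have u0: "u \<ge> 0" using c by (simp add: u_def)
    have "sqrt (z^2) \<le> sqrt (z^2 + ga^2)" by simp
    hence "\<bar>z\<bar> \<le> sqrt (z^2 + ga^2)" by simp
    hence uz: "c * \<bar>z\<bar> \<le> u" unfolding u_def using c by (simp add: mult_left_mono)
    have mz: "m * \<bar>z\<bar> \<le> c * \<bar>z\<bar>" by (rule mult_right_mono) (use m in auto)
    have "m * (1 + \<bar>z\<bar>) = m + m * \<bar>z\<bar>" by (simp add: distrib_left)
    hence "m * (1 + \<bar>z\<bar>) \<le> 1 + c * \<bar>z\<bar>" using mz m(2) by linarith
    hence mu: "m * (1 + \<bar>z\<bar>) \<le> 1 + u" using uz by linarith
    have s1: "sqrt m * sqrt (1 + \<bar>z\<bar>) \<le> sqrt (1 + u)"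
      using mu by (simp add: real_sqrt_mult[symmetric])
    have e1: "(1 + \<bar>z\<bar>)^2 = 2 + 2 * \<bar>z\<bar>^2 - (1 - \<bar>z\<bar>)^2"
      by (simp add: power2_eq_square algebra_simps)
    have e2: "\<bar>z\<bar>^2 = z^2" by simp
    have e3: "0 \<le> (1 - \<bar>z\<bar>)^2" by simp
    have "(1 + \<bar>z\<bar>)^2 \<le> 2 * (1 + z^2)" using e1 e2 e3 by (smt (verit))
    hence s2: "1 + \<bar>z\<bar> \<le> sqrt 2 * sqrt (1 + z^2)"
      by (metis abs_ge_zero add_nonneg_nonneg real_le_rsqrt real_sqrt_mult zero_le_one)
    have Ju: "\<bar>bessel_J0 u\<bar> * sqrt (1 + u) \<le> K" using K(2)[OF u0] .
    have pos1: "sqrt m * sqrt (1 + \<bar>z\<bar>) > 0" using m by simp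
    have pos2: "sqrt (1 + z^2) > 0" by (simp add: add_pos_nonneg)
    have "\<bar>bessel_J0 u\<bar> * (sqrt m * sqrt (1 + \<bar>z\<bar>)) \<le> K"
      using Ju s1 by (meson abs_ge_zero mult_left_mono order_trans)
    hence J: "\<bar>bessel_J0 u\<bar> \<le> K / (sqrt m * sqrt (1 + \<bar>z\<bar>))"
      using pos1 by (simp add: le_divide_eq)
    have "\<bar>bessel_J0 u / sqrt (1 + z^2)\<bar> = \<bar>bessel_J0 u\<bar> / sqrt (1 + z^2)"
      by (simp add: abs_divide)
    also have "\<dots> \<le> K / (sqrt m * sqrt (1 + \<bar>z\<bar>)) / sqrt (1 + z^2)"
      by (rule divide_right_mono[OF J]) (use pos2 in simp)
    also have "\<dots> \<le> K / (sqrt m * sqrt (1 + \<bar>z\<bar>)) / ((1 + \<bar>z\<bar>) / sqrt 2)"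
    proof (rule divide_left_mono)
      show "(1 + \<bar>z\<bar>) / sqrt 2 \<le> sqrt (1 + z^2)" using s2 by (simp add: field_simps)
      show "0 \<le> K / (sqrt m * sqrt (1 + \<bar>z\<bar>))" using K(1) pos1 by simp
      show "0 < sqrt (1 + z^2) * ((1 + \<bar>z\<bar>) / sqrt 2)"
        using pos2 by (intro mult_pos_pos) (auto intro: add_pos_nonneg)
    qed
    also have "\<dots> = C * H z" unfolding C_def H_def by (simp add: field_simps)
    finally show ?thesis unfolding u_def .
  qed
  thus ?thesis unfolding c_def by blast
qed

lemma f2_int:
  fixes al ga :: real
  assumes al: "al > 0"
  shows "integrable lborel (\<lambda>z. bessel_J0 (2 * sqrt al * sqrt (z^2 + ga^2)) / sqrt (1 + z^2))"
proof -
  obtain C where C: "\<And>z. \<bar>bessel_J0 (2 * sqrt al * sqrt (z^2 + ga^2)) / sqrt (1 + z^2)\<bar> \<le> C * H z"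
    using f2_bound[OF al] by blast
  show ?thesis
  proof (rule Bochner_Integration.integrable_bound[OF integrable_mult_right[OF H_int, of C]])
    show "(\<lambda>z. bessel_J0 (2 * sqrt al * sqrt (z^2 + ga^2)) / sqrt (1 + z^2)) \<in> borel_measurable lborel"
      by measurable
    show "AE x in lborel. norm (bessel_J0 (2 * sqrt al * sqrt (x^2 + ga^2)) / sqrt (1 + x^2)) \<le> norm (C * H x)"
      using C by (intro AE_I2) (metis (no_types, lifting) abs_ge_self order_trans real_norm_def)
  qed
qed


lemma alg3:
  fixes P r w z c sn k a :: real
  assumes P: "P > 0" and r: "r > 0" and w: "w > 0" and wz: "w * (w - 2*z) = 1"
    and cs: "c^2 + sn^2 = 1" and k: "k = a * w" and a2: "a^2 = P / r" and a: "a > 0"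
  shows "(k*(r*c) + P/k)^2 + k^2*(r * sn)^2 = P*r*(4*z^2 + 2 + 2*c)"
proof -
  have k0: "k > 0" using k a w by simp
  have e1: "(k*(r*c) + P/k)^2 + k^2*(r * sn)^2 = k^2*r^2*(c^2+sn^2) + 2*P*r*c + P^2/k^2"
    using k0 by (simp add: power2_eq_square field_simps)
  have kk: "k^2 = P / r * w^2" using k a2 by (simp add: power_mult_distrib)
  have e2: "k^2*r^2 = P * r * w^2" unfolding kk using r by (simp add: power2_eq_square field_simps)
  have iw: "1/w = w - 2*z" using wz w by (simp add: field_simps)
  have e3: "P^2/k^2 = P * r * (w - 2*z)^2" unfolding kk iw[symmetric]
    using P r w by (simp add: power2_eq_square field_simps)
  have e4: "P * r * w^2 + 2*P*r*c + P * r * (w - 2*z)^2 = P*r*(2*(w*(w - 2*z)) + 4*z^2 + 2*c)"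
    by (simp add: power2_eq_square algebra_simps)
  show ?thesis unfolding e1 cs e2 e3 using e4 wz by simp
qed

lemma J0_cont_intro[continuous_intros]: "isCont f x \<Longrightarrow> isCont (\<lambda>x. bessel_J0 (f x)) x"
  by (rule isCont_o2[OF _ J0_isCont])

lemma sqrt_gt_abs: "sqrt (1 + z^2) > \<bar>z::real\<bar>"
proof -
  have "sqrt (z^2) < sqrt (1 + z^2)" by (rule real_sqrt_less_mono) simp
  moreover have "sqrt (z^2) = \<bar>z\<bar>" by (rule real_sqrt_abs)
  ultimately show ?thesis by linarith
qed

lemma main_sub:
  fixes \<beta> t r \<phi> x y \<alpha> \<gamma> :: real
  assumes b: "\<beta> > 0" and t: "t > 0" and r: "r > 0"
    and x: "x = r * cos \<phi>" and y: "y = r * sin \<phi>"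
    and al: "\<alpha> = \<beta> * r * t" and ga: "\<gamma> = cos (\<phi> / 2)"
  defines "f1 \<equiv> \<lambda>k. bessel_J0 (sqrt ((k * x + \<beta> * t / k)^2 + k^2 * y^2)) / k"
    and "f2 \<equiv> \<lambda>z. bessel_J0 (2 * sqrt \<alpha> * sqrt (z^2 + \<gamma>^2)) / sqrt (1 + z^2)"
  shows "set_integrable lborel {0<..} f1" "integrable lborel f2"
    "(LBINT k:{0<..}. f1 k) = 2 * (LBINT z:{0<..}. f2 z)"
proof -
  define P where "P = \<beta> * t"
  have P: "P > 0" using b t by (simp add: P_def)
  define a where "a = sqrt (P / r)"
  have a: "a > 0" using P r by (simp add: a_def)
  have a2: "a^2 = P / r" using P r by (simp add: a_def)
  have alP: "\<alpha> = P * r" using al by (simp add: P_def)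
  have alpos: "\<alpha> > 0" using alP P r by simp
  define g where "g = (\<lambda>z. a * (z + sqrt (1 + z^2)))"
  define g' where "g' = (\<lambda>z. a * (1 + z / sqrt (1 + z^2)))"
  have S0: "sqrt (1 + z^2) > 0" for z :: real using sqrt_gt_abs[of z] by linarith
  have w0: "z + sqrt (1 + z^2) > 0" for z :: real using sqrt_gt_abs[of z] by linarith
  have gpos: "g z > 0" for z unfolding g_def using a w0 by simp
  have g'pos: "g' z > 0" for z
  proof -
    have "\<bar>z / sqrt (1 + z^2)\<bar> < 1" using sqrt_gt_abs[of z] S0[of z] by (simp add: abs_divide)
    hence "1 + z / sqrt (1 + z^2) > 0" by linarith
    thus ?thesis unfolding g'_def using a by simp
  qed
  have g'g: "g' z = g z / sqrt (1 + z^2)" for z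
    unfolding g'_def g_def using S0[of z] by (simp add: field_simps)
  have gderiv: "(g has_real_derivative g' z) (at z)" for z
  proof -
    have "1 + z^2 > 0" by (simp add: add_pos_nonneg)
    thus ?thesis unfolding g_def g'_def
      by (auto intro!: derivative_eq_intros simp: field_simps power2_eq_square)
  qed
  have g'cont: "isCont g' z" for z unfolding g'_def using S0[of z]
    by (intro continuous_intros) auto
  have f1cont: "isCont f1 k" if "k > 0" for k
    unfolding f1_def using that by (intro continuous_intros) auto
  have key: "g' z * f1 (g z) = f2 z" for z
  proof -
    define w where "w = z + sqrt (1 + z^2)"
    have w: "w > 0" using w0 by (simp add: w_def)
    have sq: "(sqrt (1 + z^2))^2 = 1 + z^2" by (simp add: add_nonneg_nonneg)
    have wz: "w * (w - 2*z) = 1" unfolding w_def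
      using sq by (simp add: power2_eq_square algebra_simps)
    have cs: "(cos \<phi>)^2 + (sin \<phi>)^2 = 1" by simp
    have E: "(g z * (r * cos \<phi>) + P / g z)^2 + (g z)^2 * (r * sin \<phi>)^2
        = P * r * (4 * z^2 + 2 + 2 * cos \<phi>)"
      by (rule alg3[OF P r w wz cs _ a2 a]) (simp add: g_def w_def)
    have cphi: "cos \<phi> = 2 * \<gamma>^2 - 1" using cos_double_cos[of "\<phi>/2"] ga by simp
    have "(g z * x + \<beta> * t / g z)^2 + (g z)^2 * y^2
        = (g z * (r * cos \<phi>) + P / g z)^2 + (g z)^2 * (r * sin \<phi>)^2"
      by (simp only: x y P_def)
    also have "\<dots> = P * r * (4 * z^2 + 2 + 2 * cos \<phi>)" by (rule E)
    also have "\<dots> = 4 * \<alpha> * (z^2 + \<gamma>^2)" unfolding cphi alP by (simp add: algebra_simps)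
    finally have E2: "(g z * x + \<beta> * t / g z)^2 + (g z)^2 * y^2 = 4 * \<alpha> * (z^2 + \<gamma>^2)" .
    have "sqrt ((g z * x + \<beta> * t / g z)^2 + (g z)^2 * y^2) = 2 * sqrt \<alpha> * sqrt (z^2 + \<gamma>^2)"
      unfolding E2 by (simp add: real_sqrt_mult)
    hence "f1 (g z) = bessel_J0 (2 * sqrt \<alpha> * sqrt (z^2 + \<gamma>^2)) / g z"
      unfolding f1_def by simp
    thus ?thesis unfolding g'g f2_def using gpos[of z] S0[of z] by (simp add: field_simps)
  qed
  show f2int: "integrable lborel f2" unfolding f2_def by (rule f2_int[OF alpos])
  have lim0: "((ereal \<circ> g \<circ> real_of_ereal) \<longlongrightarrow> 0) (at_right (-\<infinity>))"
    unfolding zero_ereal_def ereal_tendsto_simps1 ereal_tendsto_simps2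
  proof -
    have eq: "g = (\<lambda>z. a / (sqrt (1 + z^2) - z))"
    proof
      fix z :: real
      have sq: "(sqrt (1 + z^2))^2 = 1 + z^2" by (simp add: add_nonneg_nonneg)
      have pos: "sqrt (1 + z^2) - z > 0" using sqrt_gt_abs[of z] by linarith
      have "(z + sqrt (1 + z^2)) * (sqrt (1 + z^2) - z) = 1"
        using sq by (simp add: power2_eq_square algebra_simps)
      thus "g z = a / (sqrt (1 + z^2) - z)" unfolding g_def using pos
        by (simp add: field_simps)
    qed
    have "LIM z at_bot. sqrt (1 + z^2) - z :> at_top"
      by (rule filterlim_at_top_mono[OF filterlim_uminus_at_top_at_bot]) (auto intro!: always_eventually)
    hence "LIM z at_bot. sqrt (1 + z^2) - z :> at_infinity" by (rule filterlim_at_top_imp_at_infinity)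
    hence "((\<lambda>z. a / (sqrt (1 + z^2) - z)) \<longlongrightarrow> 0) at_bot" by (rule tendsto_divide_0[OF tendsto_const])
    thus "(g \<longlongrightarrow> 0) at_bot" unfolding eq .
  qed
  have liminf: "((ereal \<circ> g \<circ> real_of_ereal) \<longlongrightarrow> \<infinity>) (at_left \<infinity>)"
    unfolding ereal_tendsto_simps1 ereal_tendsto_simps2
  proof -
    have "LIM z at_top. z + sqrt (1 + z^2) :> at_top"
      by (rule filterlim_at_top_mono[OF filterlim_ident]) (auto intro!: always_eventually)
    hence "LIM z at_top. a * (z + sqrt (1 + z^2)) :> at_top"
      by (rule filterlim_tendsto_pos_mult_at_top[OF tendsto_const a])
    thus "filterlim g at_top at_top" unfolding g_def .
  qed
  have f1meas[measurable]: "f1 \<in> borel_measurable borel" unfolding f1_def by measurable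
  have "set_integrable lborel (einterval 0 \<infinity>) (\<lambda>k. \<bar>f1 k\<bar>)"
  proof (rule interval_integral_substitution_nonneg[where g=g and g'=g' and a="-\<infinity>" and b="\<infinity>"])
    show "- \<infinity> < (\<infinity>::ereal)" by simp
    show "(g has_real_derivative g' x) (at x)" for x by (rule gderiv)
    show "isCont (\<lambda>k. \<bar>f1 k\<bar>) (g x)" for x by (intro continuous_intros f1cont gpos)
    show "isCont g' x" for x by (rule g'cont)
    show "0 \<le> \<bar>f1 (g x)\<bar>" for x by simp
    show "0 \<le> g' x" for x using g'pos[of x] by simp
    show "((ereal \<circ> g \<circ> real_of_ereal) \<longlongrightarrow> 0) (at_right (-\<infinity>))" by (rule lim0)
    show "((ereal \<circ> g \<circ> real_of_ereal) \<longlongrightarrow> \<infinity>) (at_left \<infinity>)" by (rule liminf)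
    have "(\<lambda>x. \<bar>f1 (g x)\<bar> * g' x) = (\<lambda>x. \<bar>f2 x\<bar>)"
    proof
      fix x show "\<bar>f1 (g x)\<bar> * g' x = \<bar>f2 x\<bar>"
        using key[of x] g'pos[of x] by (metis abs_mult abs_of_pos mult.commute)
    qed
    thus "set_integrable lborel (einterval (- \<infinity>) \<infinity>) (\<lambda>x. \<bar>f1 (g x)\<bar> * g' x)"
      unfolding einterval_eq_UNIV set_integrable_def using f2int by simp
  qed
  hence absint: "set_integrable lborel {0<..} (\<lambda>k. \<bar>f1 k\<bar>)"
    by (simp add: einterval_eq_Ici[of 0, unfolded zero_ereal_def[symmetric]])
  show f1int: "set_integrable lborel {0<..} f1"
    by (rule set_integrable_bound[OF absint]) (auto simp: set_borel_measurable_def)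
  have f2ii: "interval_lebesgue_integrable lborel (-\<infinity>) \<infinity> f2"
    unfolding interval_lebesgue_integrable_def einterval_eq_UNIV set_integrable_def using f2int by simp
  have "(LBINT x=0..\<infinity>. f1 x) = (LBINT x=-\<infinity>..\<infinity>. g' x *\<^sub>R f1 (g x))"
  proof (rule interval_integral_substitution_integrable[where g=g and g'=g' and a="-\<infinity>" and b="\<infinity>"])
    show "- \<infinity> < (\<infinity>::ereal)" by simp
    show "(g has_real_derivative g' x) (at x)" for x by (rule gderiv)
    show "isCont f1 (g x)" for x by (intro f1cont gpos)
    show "isCont g' x" for x by (rule g'cont)
    show "0 \<le> g' x" for x using g'pos[of x] by simp
    show "((ereal \<circ> g \<circ> real_of_ereal) \<longlongrightarrow> 0) (at_right (-\<infinity>))" by (rule lim0)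
    show "((ereal \<circ> g \<circ> real_of_ereal) \<longlongrightarrow> \<infinity>) (at_left \<infinity>)" by (rule liminf)
    have "(\<lambda>x. g' x *\<^sub>R f1 (g x)) = f2" using key by auto
    thus "set_integrable lborel (einterval (- \<infinity>) \<infinity>) (\<lambda>x. g' x *\<^sub>R f1 (g x))"
      unfolding einterval_eq_UNIV set_integrable_def using f2int by simp
    show "set_integrable lborel (einterval 0 \<infinity>) f1"
      using f1int by (simp add: einterval_eq_Ici[of 0, unfolded zero_ereal_def[symmetric]])
  qed
  also have "(\<lambda>x. g' x *\<^sub>R f1 (g x)) = f2" using key by auto
  also have "(LBINT x=-\<infinity>..\<infinity>. f2 x) = (LBINT x=-\<infinity>..0. f2 x) + (LBINT x=0..\<infinity>. f2 x)"
    using interval_integral_sum[of "-\<infinity>" 0 "\<infinity>" f2] f2ii by simp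
  also have "(LBINT x=-\<infinity>..0. f2 x) = (LBINT x=-0..-(-\<infinity>). f2 (-x))"
    by (rule interval_integral_reflect)
  also have "(\<lambda>x. f2 (-x)) = f2" unfolding f2_def by simp
  also have "-(-\<infinity>) = (\<infinity>::ereal)" by simp
  also have "-0 = (0::ereal)" by simp
  finally have "(LBINT x=0..\<infinity>. f1 x) = 2 * (LBINT x=0..\<infinity>. f2 x)" by simp
  thus "(LBINT k:{0<..}. f1 k) = 2 * (LBINT z:{0<..}. f2 z)"
    by (simp add: interval_lebesgue_integral_0_infty)
qed


theorem mainTheorem5:
  fixes \<beta> N t r \<phi> x y \<alpha> \<gamma> \<psi>G :: real
  assumes "\<beta> > 0" and "t > 0" and "r > 0"
    and "x = r * cos \<phi>" and "y = r * sin \<phi>"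
    and "\<alpha> = \<beta> * r * t" and "\<gamma> = cos (\<phi> / 2)"
    and "\<psi>G = - N / (2 * pi) *
           integral {0<..} (\<lambda>k. bessel_J0 (sqrt ((k * x + \<beta> * t / k)^2 + k^2 * y^2)) / k)"
  shows "(\<lambda>k. bessel_J0 (sqrt ((k * x + \<beta> * t / k)^2 + k^2 * y^2)) / k) integrable_on {0<..} \<and>
         (\<lambda>z. bessel_J0 (2 * sqrt \<alpha> * sqrt (z^2 + \<gamma>^2)) / sqrt (1 + z^2)) integrable_on {0<..} \<and>
         \<psi>G = - N / pi *
           integral {0<..} (\<lambda>z. bessel_J0 (2 * sqrt \<alpha> * sqrt (z^2 + \<gamma>^2)) / sqrt (1 + z^2))"
proof -
  note M = main_sub[OF assms(1-7)]
  let ?f1 = "\<lambda>k. bessel_J0 (sqrt ((k * x + \<beta> * t / k)^2 + k^2 * y^2)) / k"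
  let ?f2 = "\<lambda>z. bessel_J0 (2 * sqrt \<alpha> * sqrt (z^2 + \<gamma>^2)) / sqrt (1 + z^2)"
  have s1: "set_integrable lborel {0<..} ?f1" by (rule M(1))
  have s2: "set_integrable lborel {0<..} ?f2"
    unfolding set_integrable_def by (rule integrable_mult_indicator[OF _ M(2)]) simp
  have i1: "integral {0<..} ?f1 = (LBINT k:{0<..}. ?f1 k)"
    using set_borel_integral_eq_integral(2)[OF s1] by simp
  have i2: "integral {0<..} ?f2 = (LBINT k:{0<..}. ?f2 k)"
    using set_borel_integral_eq_integral(2)[OF s2] by simp
  show ?thesis
  proof (intro conjI)
    show "?f1 integrable_on {0<..}" by (rule set_borel_integral_eq_integral(1)[OF s1])
    show "?f2 integrable_on {0<..}" by (rule set_borel_integral_eq_integral(1)[OF s2])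
    show "\<psi>G = - N / pi * integral {0<..} ?f2"
      unfolding assms(8) i1 i2 M(3) by simp
  qed
qed

end
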